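(* For every $\alpha\in[\tfrac12,1)$ there is a sequence of instances $(\mathcal{T}_n,w_n)$ (finite trees with $w_n:V(\mathcal{T}_n)\to\mathbb{R}_{\ge0}$) with $w_n(\mathcal{T}_n)=1$ and $\lim_{n\to\infty}\mathtt{OPT}(\mathcal{T}_n,w_n)=\infty$, such that $$\mathtt{cent}^\alpha(\mathcal{T}_n,w_n)\ge\frac{1}{1-\alpha}\mathtt{OPT}(\mathcal{T}_n,w_n)-\frac{\alpha}{1-\alpha}.$$
   Context: For a subgraph $\mathcal{H}$ of $\mathcal{T}$, $w(\mathcal{H})=\sum_{x\in V(\mathcal{H})}w(x)$. A search tree on a tree $\mathcal{T}$ is a rooted tree $T$ with vertex set $V(\mathcal{T})$ defined recursively: its root is an arbitrary vertex $r$, and the children of $r$ are the roots of search trees built on the connected components of $\mathcal{T}-r$; a single-vertex tree has only itself as search tree. $\mathtt{cost}_w(T)=\sum_x w(x)\,\mathtt{depth}_T(x)$ with root depth $1$; $\mathtt{OPT}(\mathcal{T},w)$ is the minimum cost over all search trees on $\mathcal{T}$. For $0\le\alpha\le1$, a vertex $v$ is an $\alpha$-centroid of $(\mathcal{T},w)$ if every component $\mathcal{H}$ of $\mathcal{T}-v$ has $w(\mathcal{H})\le\alpha\, w(\mathcal{T})$. A search tree $T$ is an $\alpha$-centroid tree if every vertex $x$ is an $\alpha$-centroid of $(\mathcal{T}[V(T_x)],w)$, where $T_x$ is the subtree of $T$ rooted at $x$. $\mathtt{cent}^\alpha(\mathcal{T},w)$ is the maximum cost of an $\alpha$-centroid tree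 of $(\mathcal{T},w)$, or $0$ if none exists. *)

theory Defs
  imports Complex_Main
begin

text \<open>Undirected graphs: vertex set V and edges given as 2-element vertex sets.\<close>

definition adj :: "'a set set \<Rightarrow> 'a set \<Rightarrow> ('a \<times> 'a) set" where
  "adj E S = {(x, y). x \<in> S \<and> y \<in> S \<and> {x, y} \<in> E}"

definition comps :: "'a set set \<Rightarrow> 'a set \<Rightarrow> 'a set set" where
  "comps E S = {C. \<exists>x\<in>S. C = {y. (x, y) \<in> (adj E S)\<^sup>*}}"

definition is_tree :: "'a set \<Rightarrow> 'a set set \<Rightarrow> bool" where
  "is_tree V E \<longleftrightarrow> finite V \<and> V \<noteq> {} \<and>
     (\<forall>e\<in>E. e \<subseteq> V \<and> card e = 2) \<and>
     (\<forall>x\<in>V. \<forall>y\<in>V. (x, y) \<in> (adj E V)\<^sup>*) \<and>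
     card E = card V - 1"

definition wsum :: "('a \<Rightarrow> real) \<Rightarrow> 'a set \<Rightarrow> real" where
  "wsum w S = (\<Sum>x\<in>S. w x)"

datatype 'a stree = Node 'a "'a stree list"

fun verts :: "'a stree \<Rightarrow> 'a set" where
  "verts (Node r ts) = insert r (\<Union>t\<in>set ts. verts t)"

fun is_search_tree :: "'a set set \<Rightarrow> 'a set \<Rightarrow> 'a stree \<Rightarrow> bool" where
  "is_search_tree E S (Node r ts) \<longleftrightarrow>
     r \<in> S \<and> distinct (map verts ts) \<and> set (map verts ts) = comps E (S - {r}) \<and>
     (\<forall>t\<in>set ts. is_search_tree E (verts t) t)"

text \<open>Vertices with their depths (root has depth 1).\<close>
fun depths :: "'a stree \<Rightarrow> ('a \<times> nat) list" where
  "depths (Node r ts) = (r, 1) # concat (map (\<lambda>t. map (\<lambda>(x, d). (x, Suc d)) (depths t)) ts)"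

definition cost :: "('a \<Rightarrow> real) \<Rightarrow> 'a stree \<Rightarrow> real" where
  "cost w T = sum_list (map (\<lambda>(x, d). w x * real d) (depths T))"

definition OPT :: "'a set \<Rightarrow> 'a set set \<Rightarrow> ('a \<Rightarrow> real) \<Rightarrow> real" where
  "OPT V E w = Inf {cost w T | T. is_search_tree E V T}"

fun subtrees :: "'a stree \<Rightarrow> 'a stree list" where
  "subtrees (Node r ts) = Node r ts # concat (map subtrees ts)"

fun root :: "'a stree \<Rightarrow> 'a" where
  "root (Node r ts) = r"

definition is_centroid :: "real \<Rightarrow> 'a set set \<Rightarrow> ('a \<Rightarrow> real) \<Rightarrow> 'a set \<Rightarrow> 'a \<Rightarrow> bool" where
  "is_centroid \<alpha> E w S v \<longleftrightarrow> v \<in> S \<and> (\<forall>C\<in>comps E (S - {v}). wsum w C \<le> \<alpha> * wsum w S)"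

definition is_centroid_tree :: "real \<Rightarrow> 'a set set \<Rightarrow> ('a \<Rightarrow> real) \<Rightarrow> 'a set \<Rightarrow> 'a stree \<Rightarrow> bool" where
  "is_centroid_tree \<alpha> E w V T \<longleftrightarrow> is_search_tree E V T \<and>
     (\<forall>s\<in>set (subtrees T). is_centroid \<alpha> E w (verts s) (root s))"

definition cent :: "real \<Rightarrow> 'a set \<Rightarrow> 'a set set \<Rightarrow> ('a \<Rightarrow> real) \<Rightarrow> real" where
  "cent \<alpha> V E w = (let C = {cost w T | T. is_centroid_tree \<alpha> E w V T} in
     if C = {} then 0 else Sup C)"

end

theory Submission
  imports Defs
begin


lemma adj_mono: "E \<subseteq> E' \<Longrightarrow> S \<subseteq> S' \<Longrightarrow> adj E S \<subseteq> adj E' S'"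
  unfolding adj_def by auto

lemma adj_sym: "(x,y) \<in> adj E S \<Longrightarrow> (y,x) \<in> adj E S"
  unfolding adj_def by (auto simp: insert_commute)

lemma rtrancl_adj_in: "(x,y) \<in> (adj E S)\<^sup>* \<Longrightarrow> x = y \<or> y \<in> S"
  by (induction rule: rtrancl_induct) (auto simp: adj_def)

lemma comps_sub: "C \<in> comps E S \<Longrightarrow> C \<subseteq> S"
proof -
  assume "C \<in> comps E S"
  then obtain x where "x \<in> S" "C = {y. (x, y) \<in> (adj E S)\<^sup>*}" unfolding comps_def by blast
  then show "C \<subseteq> S" using rtrancl_adj_in[of x _ E S] by auto
qed

lemma Union_comps: "\<Union>(comps E S) = S"
proof
  show "\<Union> (comps E S) \<subseteq> S" using comps_sub by blast
  show "S \<subseteq> \<Union> (comps E S)" unfolding comps_def by blast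
qed

lemma comps_empty[simp]: "comps E {} = {}"
  unfolding comps_def by auto

lemma comps_conn:
  assumes "S \<noteq> {}" "\<forall>x\<in>S. \<forall>y\<in>S. (x,y) \<in> (adj E S)\<^sup>*"
  shows "comps E S = {S}"
proof -
  have "\<And>x. x \<in> S \<Longrightarrow> {y. (x, y) \<in> (adj E S)\<^sup>*} = S"
  proof -
    fix x assume "x \<in> S"
    show "{y. (x, y) \<in> (adj E S)\<^sup>*} = S"
    proof (intro equalityI subsetI)
      fix y assume "y \<in> {y. (x, y) \<in> (adj E S)\<^sup>*}"
      then show "y \<in> S" using rtrancl_adj_in[of x y E S] \<open>x \<in> S\<close> by auto
    next
      fix y assume "y \<in> S" then show "y \<in> {y. (x, y) \<in> (adj E S)\<^sup>*}" using assms(2) \<open>x \<in> S\<close> by auto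
    qed
  qed
  then show ?thesis using assms(1) unfolding comps_def by auto
qed

lemma comps_single[simp]: "comps E {x} = {{x}}"
  by (rule comps_conn) auto

lemma class_split:
  assumes "x \<in> A" "A \<inter> B = {}" "\<forall>u\<in>A. \<forall>v\<in>B. {u,v} \<notin> E"
  shows "{y. (x, y) \<in> (adj E (A \<union> B))\<^sup>*} = {y. (x, y) \<in> (adj E A)\<^sup>*}"
proof -
  have "(x,y) \<in> (adj E A)\<^sup>*" if "(x,y) \<in> (adj E (A \<union> B))\<^sup>*" for y
    using that
  proof (induction rule: rtrancl_induct)
    case base then show ?case by simp
  next
    case (step y z)
    have "y \<in> A" using step.IH assms(1) rtrancl_adj_in by metis
    have "z \<in> A \<union> B" "{y,z} \<in> E" using step.hyps(2) unfolding adj_def by auto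
    then have "z \<in> A" using assms(3) \<open>y \<in> A\<close> by blast
    then have "(y,z) \<in> adj E A" using \<open>y \<in> A\<close> \<open>{y,z} \<in> E\<close> unfolding adj_def by auto
    then show ?case using step.IH by auto
  qed
  moreover have "(adj E A)\<^sup>* \<subseteq> (adj E (A \<union> B))\<^sup>*"
    by (rule rtrancl_mono) (rule adj_mono, auto)
  ultimately show ?thesis by auto
qed

lemma comps_split:
  assumes "A \<inter> B = {}" "\<forall>u\<in>A. \<forall>v\<in>B. {u,v} \<notin> E"
  shows "comps E (A \<union> B) = comps E A \<union> comps E B"
proof -
  have b: "\<forall>u\<in>B. \<forall>v\<in>A. {u,v} \<notin> E" using assms(2) by (metis insert_commute)
  have "B \<inter> A = {}" using assms(1) by auto
  have 1: "x \<in> A \<Longrightarrow> {y. (x, y) \<in> (adj E (A \<union> B))\<^sup>*} = {y. (x, y) \<in> (adj E A)\<^sup>*}" for x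
    using class_split[OF _ assms] by blast
  have 2: "x \<in> B \<Longrightarrow> {y. (x, y) \<in> (adj E (A \<union> B))\<^sup>*} = {y. (x, y) \<in> (adj E B)\<^sup>*}" for x
    using class_split[OF _ \<open>B \<inter> A = {}\<close> b] by (simp add: Un_commute)
  show ?thesis
  proof (intro equalityI subsetI)
    fix C assume "C \<in> comps E (A \<union> B)"
    then obtain x where x: "x \<in> A \<union> B" "C = {y. (x, y) \<in> (adj E (A \<union> B))\<^sup>*}"
      unfolding comps_def by blast
    show "C \<in> comps E A \<union> comps E B"
    proof (cases "x \<in> A")
      case True then show ?thesis using 1[OF True] x unfolding comps_def by blast
    next
      case False then have "x \<in> B" using x by blast
      then show ?thesis using 2[OF \<open>x \<in> B\<close>] x unfolding comps_def by blast
    qed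
  next
    fix C assume "C \<in> comps E A \<union> comps E B"
    then show "C \<in> comps E (A \<union> B)"
    proof
      assume "C \<in> comps E A"
      then obtain x where x: "x \<in> A" "C = {y. (x, y) \<in> (adj E A)\<^sup>*}" unfolding comps_def by blast
      then show ?thesis using 1[OF x(1)] unfolding comps_def by blast
    next
      assume "C \<in> comps E B"
      then obtain x where x: "x \<in> B" "C = {y. (x, y) \<in> (adj E B)\<^sup>*}" unfolding comps_def by blast
      then show ?thesis using 2[OF x(1)] unfolding comps_def by blast
    qed
  qed
qed

lemma search_verts: "is_search_tree E S T \<Longrightarrow> verts T = S"
proof (induction T arbitrary: S)
  case (Node r ts)
  have "verts t = verts t" for t by simp
  have "(\<Union>t\<in>set ts. verts t) = \<Union>(set (map verts ts))" by auto
  also have "\<dots> = S - {r}" using Node.prems Union_comps[of E "S - {r}"] by simp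
  finally show ?case using Node.prems by auto
qed

lemma search_child:
  assumes "is_search_tree E S (Node r ts)" "t \<in> set ts"
  shows "is_search_tree E (verts t) t" "verts t \<in> comps E (S - {r})" "verts t \<subseteq> S - {r}"
proof -
  show 1: "is_search_tree E (verts t) t" "verts t \<in> comps E (S - {r})" using assms by auto
  then show "verts t \<subseteq> S - {r}" using comps_sub by blast
qed



definition tw :: "('a \<Rightarrow> real) \<Rightarrow> 'a stree \<Rightarrow> real" where
  "tw w T = sum_list (map (\<lambda>(x, d). w x) (depths T))"

definition phi :: "('a \<Rightarrow> real) \<Rightarrow> 'a set \<Rightarrow> 'a stree \<Rightarrow> real" where
  "phi w A T = sum_list (map (\<lambda>(x, d). if x \<in> A then w x * real d else 0) (depths T))"

definition psi :: "('a \<Rightarrow> real) \<Rightarrow> 'a set \<Rightarrow> 'a stree \<Rightarrow> real" where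
  "psi w A T = sum_list (map (\<lambda>(x, d). if x \<in> A then w x else 0) (depths T))"

lemma sum_list_shift:
  "sum_list (map (\<lambda>(x, d). f x * real d) (map (\<lambda>(x, d). (x, Suc d)) L))
   = sum_list (map (\<lambda>(x, d). f x * real d) L) + sum_list (map (\<lambda>(x, d). f x) L)"
  by (induction L) (auto simp: algebra_simps)

lemma sum_list_concat_map: "sum_list (concat (map g ts)) = sum_list (map (\<lambda>t. sum_list (g t)) ts)"
  by (induction ts) auto

lemma cost_Node: "cost w (Node r ts) = w r + sum_list (map (\<lambda>t. cost w t + tw w t) ts)"
proof -
  have "cost w (Node r ts) = w r + sum_list (map (\<lambda>t. sum_list (map (\<lambda>(x, d). w x * real d)
         (map (\<lambda>(x, d). (x, Suc d)) (depths t)))) ts)"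
    unfolding cost_def by (simp add: map_concat sum_list_concat_map o_def)
  also have "\<dots> = w r + sum_list (map (\<lambda>t. cost w t + tw w t) ts)"
    unfolding cost_def tw_def using sum_list_shift[of w] by simp
  finally show ?thesis .
qed

lemma tw_Node: "tw w (Node r ts) = w r + sum_list (map (tw w) ts)"
proof -
  have "tw w (Node r ts) = w r + sum_list (map (\<lambda>t. sum_list (map (\<lambda>(x, d). w x)
         (map (\<lambda>(x, d). (x, Suc d)) (depths t)))) ts)"
    unfolding tw_def by (simp add: map_concat sum_list_concat_map o_def)
  also have "\<dots> = w r + sum_list (map (tw w) ts)"
    unfolding tw_def by (simp add: o_def case_prod_unfold)
  finally show ?thesis .
qed

lemma phi_cost: "phi w A T = cost (\<lambda>x. if x \<in> A then w x else 0) T"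
  unfolding phi_def cost_def by (rule arg_cong[where f=sum_list]) auto

lemma psi_tw: "psi w A T = tw (\<lambda>x. if x \<in> A then w x else 0) T"
  unfolding psi_def tw_def by (rule arg_cong[where f=sum_list]) auto

lemma phi_Node: "phi w A (Node r ts) = (if r \<in> A then w r else 0) + sum_list (map (\<lambda>t. phi w A t + psi w A t) ts)"
  unfolding phi_cost psi_tw cost_Node by simp

lemma psi_Node: "psi w A (Node r ts) = (if r \<in> A then w r else 0) + sum_list (map (psi w A) ts)"
  unfolding psi_tw tw_Node by simp

lemma sum_list_zero: "(\<forall>p\<in>set L. g p = 0) \<Longrightarrow> sum_list (map g L) = (0::real)"
  by (induction L) auto

lemma cost_add: "cost (\<lambda>x. f x + g x) T = cost f T + cost g T"
  unfolding cost_def by (simp add: case_prod_unfold algebra_simps sum_list_addf)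

lemma tw_add: "tw (\<lambda>x. f x + g x) T = tw f T + tw g T"
  unfolding tw_def by (simp add: case_prod_unfold sum_list_addf)

lemma set_depths: "fst ` set (depths T) = verts T"
  by (induction T) (auto simp: image_iff case_prod_unfold, force+)

lemma cost_zero: "\<forall>x\<in>verts T. f x = 0 \<Longrightarrow> cost f T = 0"
proof -
  assume a: "\<forall>x\<in>verts T. f x = 0"
  have "\<forall>p \<in> set (depths T). (\<lambda>(x, d). f x * real d) p = 0"
    using a set_depths[of T] by force
  then show ?thesis unfolding cost_def by (simp add: sum_list_zero case_prod_unfold)
qed

lemma tw_zero: "\<forall>x\<in>verts T. f x = 0 \<Longrightarrow> tw f T = 0"
proof -
  assume a: "\<forall>x\<in>verts T. f x = 0"
  have "\<forall>p \<in> set (depths T). (\<lambda>(x, d). f x) p = 0"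
    using a set_depths[of T] by force
  then show ?thesis unfolding tw_def by (simp add: sum_list_zero case_prod_unfold)
qed

lemma phi_union: "A \<inter> B = {} \<Longrightarrow> phi w (A \<union> B) T = phi w A T + phi w B T"
  unfolding phi_def by (subst sum_list_addf[symmetric]) (rule arg_cong[where f=sum_list], auto)

lemma psi_union: "A \<inter> B = {} \<Longrightarrow> psi w (A \<union> B) T = psi w A T + psi w B T"
  unfolding psi_def by (subst sum_list_addf[symmetric]) (rule arg_cong[where f=sum_list], auto)

lemma phi_nonneg: "\<forall>x. 0 \<le> w x \<Longrightarrow> 0 \<le> phi w A T"
  unfolding phi_def by (rule sum_list_nonneg) auto

lemma psi_nonneg: "\<forall>x. 0 \<le> w x \<Longrightarrow> 0 \<le> psi w A T"
  unfolding psi_def by (rule sum_list_nonneg) auto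

lemma phi_le_cost: "\<forall>x. 0 \<le> w x \<Longrightarrow> phi w A T \<le> cost w T"
  unfolding phi_def cost_def by (rule sum_list_mono) auto

lemma cost_nonneg: "\<forall>x. 0 \<le> w x \<Longrightarrow> 0 \<le> cost w T"
  unfolding cost_def by (rule sum_list_nonneg) auto

lemma member_le_sum_list_nonneg:
  fixes g :: "'b \<Rightarrow> real"
  assumes "t \<in> set ts" "\<forall>u\<in>set ts. 0 \<le> g u"
  shows "g t \<le> sum_list (map g ts)"
  using assms
proof (induction ts)
  case Nil then show ?case by simp
next
  case (Cons a ts)
  have "0 \<le> sum_list (map g ts)" using Cons.prems(2) by (auto intro!: sum_list_nonneg)
  then show ?case using Cons by (cases "t = a") (auto intro: add_increasing)
qed



fun N :: "nat \<Rightarrow> nat" where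
  "N 0 = 1" | "N (Suc j) = 2 * N j + 1"

definition Bk :: "nat \<Rightarrow> nat \<Rightarrow> nat set" where
  "Bk j off = {off..<off + N j}"

fun Eb :: "nat \<Rightarrow> nat \<Rightarrow> nat set set" where
  "Eb 0 off = {}"
| "Eb (Suc j) off = Eb j off \<union> Eb j (Suc (off + N j)) \<union> {{off, off + N j}, {off + N j, Suc (off + N j)}}"

fun wt :: "real \<Rightarrow> nat \<Rightarrow> nat \<Rightarrow> real \<Rightarrow> nat \<Rightarrow> real" where
  "wt a 0 off s x = (if x = off then s else 0)"
| "wt a (Suc j) off s x = wt a j off (a * s) x + wt a j (Suc (off + N j)) ((1 - a) * s) x"

inductive isblk :: "real \<Rightarrow> nat \<Rightarrow> nat \<Rightarrow> nat \<Rightarrow> real \<Rightarrow> bool" for a K where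
  top: "isblk a K K 0 1"
| left: "isblk a K (Suc j) off s \<Longrightarrow> isblk a K j off (a * s)"
| right: "isblk a K (Suc j) off s \<Longrightarrow> isblk a K j (Suc (off + N j)) ((1 - a) * s)"

lemma N_pos: "1 \<le> N j"
  by (induction j) auto

lemma off_in[simp]: "off \<in> Bk j off"
  using N_pos[of j] by (auto simp: Bk_def)

lemma B_Suc: "Bk (Suc j) off = Bk j off \<union> {off + N j} \<union> Bk j (Suc (off + N j))"
  by (auto simp: Bk_def)

lemma mid_notL[simp]: "off + N j \<notin> Bk j off"
  by (auto simp: Bk_def)

lemma mid_notR[simp]: "off + N j \<notin> Bk j (Suc (off + N j))"
  by (auto simp: Bk_def)

lemma LR_disj: "Bk j off \<inter> Bk j (Suc (off + N j)) = {}"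
  by (auto simp: Bk_def)

lemma LR_disj': "x \<in> Bk j off \<Longrightarrow> x \<notin> Bk j (Suc (off + N j))"
  by (auto simp: Bk_def)

lemma LR_disj'': "x \<in> Bk j (Suc (off + N j)) \<Longrightarrow> x \<notin> Bk j off"
  by (auto simp: Bk_def)

lemma off_notR[simp]: "off \<notin> Bk j (Suc (off + N j))"
  by (auto simp: Bk_def)

lemma finite_Bk[simp]: "finite (Bk j off)"
  by (simp add: Bk_def)

lemma card_Bk: "card (Bk j off) = N j"
  by (simp add: Bk_def)

lemma Eb_sub: "e \<in> Eb j off \<Longrightarrow> e \<subseteq> Bk j off \<and> card e = 2"
proof (induction j arbitrary: off)
  case 0 then show ?case by simp
next
  case (Suc j)
  have "N j \<ge> 1" using N_pos by auto
  then show ?case using Suc by (auto simp: B_Suc)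
qed

lemma Eb_cases:
  assumes "e \<in> Eb (Suc j) off"
  shows "e \<subseteq> Bk j off \<or> e \<subseteq> Bk j (Suc (off + N j)) \<or> e = {off, off + N j} \<or> e = {off + N j, Suc (off + N j)}"
  using assms Eb_sub by auto

lemma finite_Eb: "finite (Eb j off)"
  by (induction j arbitrary: off) auto

lemma isblk_mono: "isblk a K j off s \<Longrightarrow> Eb j off \<subseteq> Eb K 0 \<and> Bk j off \<subseteq> Bk K 0"
  by (induction rule: isblk.induct) (auto simp: B_Suc)

lemma isblk_edge: "isblk a K j off s \<Longrightarrow> e \<in> Eb K 0 \<Longrightarrow> e \<subseteq> Bk j off \<Longrightarrow> e \<in> Eb j off"
proof (induction arbitrary: e rule: isblk.induct)
  case top then show ?case by simp
next
  case (left j off s)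
  then have E: "e \<in> Eb (Suc j) off" by (auto simp: B_Suc)
  obtain x where x: "x \<in> e" using Eb_sub[of e K 0] left.prems by fastforce
  have xL: "x \<in> Bk j off" using x left.prems by auto
  have "\<not> e \<subseteq> Bk j (Suc (off + N j))" using x xL LR_disj' by blast
  moreover have "e \<noteq> {off, off + N j}" "e \<noteq> {off + N j, Suc (off + N j)}" using left.prems(2) by auto
  ultimately show ?case using E Eb_sub[of e j "Suc (off + N j)"] by auto
next
  case (right j off s)
  then have E: "e \<in> Eb (Suc j) off" by (auto simp: B_Suc)
  obtain x where x: "x \<in> e" using Eb_sub[of e K 0] right.prems by fastforce
  have xR: "x \<in> Bk j (Suc (off + N j))" using x right.prems by auto
  have "\<not> e \<subseteq> Bk j off" using x xR LR_disj'' by blast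
  moreover have "e \<noteq> {off, off + N j}" "e \<noteq> {off + N j, Suc (off + N j)}" using right.prems(2) by auto
  ultimately show ?case using E Eb_sub[of e j off] by auto
qed

lemma wt_out: "x \<notin> Bk j off \<Longrightarrow> wt a j off s x = 0"
  by (induction j arbitrary: off s) (auto simp: B_Suc)

lemma wt_nonneg: "0 \<le> a \<Longrightarrow> a \<le> 1 \<Longrightarrow> 0 \<le> s \<Longrightarrow> 0 \<le> wt a j off s x"
  by (induction j arbitrary: off s) auto

lemma wt_le: "0 \<le> a \<Longrightarrow> a \<le> 1 \<Longrightarrow> 0 \<le> s \<Longrightarrow> wt a j off s x \<le> s"
proof (induction j arbitrary: off s)
  case 0 then show ?case by simp
next
  case (Suc j)
  show ?case
  proof (cases "x \<in> Bk j off")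
    case True
    then have "wt a j (Suc (off + N j)) ((1 - a) * s) x = 0" using wt_out LR_disj' by blast
    moreover have "wt a j off (a * s) x \<le> a * s" using Suc by auto
    moreover have "a * s \<le> s" using Suc.prems by (simp add: mult_left_le_one_le)
    ultimately show ?thesis by simp
  next
    case False
    then have "wt a j off (a * s) x = 0" using wt_out by blast
    moreover have "wt a j (Suc (off + N j)) ((1 - a) * s) x \<le> (1 - a) * s" using Suc by auto
    moreover have "(1 - a) * s \<le> s" using Suc.prems by (simp add: mult_left_le_one_le)
    ultimately show ?thesis by simp
  qed
qed

lemma isblk_s: "isblk a K j off s \<Longrightarrow> 0 \<le> a \<Longrightarrow> a \<le> 1 \<Longrightarrow> 0 \<le> s"
  by (induction rule: isblk.induct) auto

lemma isblk_wt: "isblk a K j off s \<Longrightarrow> x \<in> Bk j off \<Longrightarrow> wt a K 0 1 x = wt a j off s x"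
proof (induction rule: isblk.induct)
  case top then show ?case by simp
next
  case (left j off s)
  then show ?case using wt_out[of x j "Suc (off + N j)"] LR_disj' by (auto simp: B_Suc)
next
  case (right j off s)
  then show ?case using wt_out[of x j off] LR_disj'' by (auto simp: B_Suc)
qed

lemma wsum_wt: "sum (wt a j off s) (Bk j off) = s"
proof (induction j arbitrary: off s)
  case 0 then show ?case by (simp add: Bk_def)
next
  case (Suc j)
  let ?L = "Bk j off" and ?R = "Bk j (Suc (off + N j))" and ?B = "Bk (Suc j) off"
  have f: "sum (wt a j off (a * s)) ?B = sum (wt a j off (a * s)) ?L"
    by (rule sum.mono_neutral_right) (auto simp: B_Suc wt_out)
  have g: "sum (wt a j (Suc (off + N j)) ((1 - a) * s)) ?B = sum (wt a j (Suc (off + N j)) ((1 - a) * s)) ?R"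
    by (rule sum.mono_neutral_right) (auto simp: B_Suc wt_out)
  have "sum (wt a (Suc j) off s) ?B = sum (wt a j off (a * s)) ?B + sum (wt a j (Suc (off + N j)) ((1 - a) * s)) ?B"
    by (simp add: sum.distrib)
  also have "\<dots> = a * s + (1 - a) * s" using f g Suc by simp
  finally show ?case by (simp add: algebra_simps)
qed

lemma conn_Bk: "\<forall>x\<in>Bk j off. \<forall>y\<in>Bk j off. (x,y) \<in> (adj (Eb j off) (Bk j off))\<^sup>*"
proof (induction j arbitrary: off)
  case 0 then show ?case by (simp add: Bk_def)
next
  case (Suc j)
  let ?m = "off + N j" and ?o = "Suc (off + N j)"
  let ?r = "adj (Eb (Suc j) off) (Bk (Suc j) off)"
  have monoL: "(adj (Eb j off) (Bk j off))\<^sup>* \<subseteq> ?r\<^sup>*"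
    by (rule rtrancl_mono, rule adj_mono) (auto simp: B_Suc)
  have monoR: "(adj (Eb j ?o) (Bk j ?o))\<^sup>* \<subseteq> ?r\<^sup>*"
    by (rule rtrancl_mono, rule adj_mono) (auto simp: B_Suc)
  have e1: "(off, ?m) \<in> ?r" "(?m, off) \<in> ?r" by (auto simp: adj_def B_Suc insert_commute)
  have e2: "(?m, ?o) \<in> ?r" "(?o, ?m) \<in> ?r" by (auto simp: adj_def B_Suc insert_commute)
  have to: "(off, x) \<in> ?r\<^sup>*" if xB: "x \<in> Bk (Suc j) off" for x
  proof -
    consider "x \<in> Bk j off" | "x = ?m" | "x \<in> Bk j ?o" using xB unfolding B_Suc by blast
    then show ?thesis
    proof cases
      case 1 then show ?thesis using Suc monoL by auto
    next
      case 2 then show ?thesis using e1 by auto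
    next
      case 3
      then have "(?o, x) \<in> ?r\<^sup>*" using Suc monoR by auto
      then show ?thesis using e1 e2 by (meson converse_rtrancl_into_rtrancl)
    qed
  qed
  have fr: "(x, off) \<in> ?r\<^sup>*" if xB: "x \<in> Bk (Suc j) off" for x
  proof -
    consider "x \<in> Bk j off" | "x = ?m" | "x \<in> Bk j ?o" using xB unfolding B_Suc by blast
    then show ?thesis
    proof cases
      case 1 then show ?thesis using Suc monoL by auto
    next
      case 2 then show ?thesis using e1 by auto
    next
      case 3
      then have "(x, ?o) \<in> ?r\<^sup>*" using Suc monoR by auto
      then show ?thesis using e1 e2 by (meson rtrancl_into_rtrancl)
    qed
  qed
  show ?case using to fr by (meson rtrancl_trans)
qed

lemma card_Eb: "card (Eb j off) = N j - 1"
proof (induction j arbitrary: off)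
  case 0 then show ?case by simp
next
  case (Suc j)
  let ?m = "off + N j" and ?o = "Suc (off + N j)"
  have d1: "Eb j off \<inter> Eb j ?o = {}"
  proof (rule ccontr)
    assume "Eb j off \<inter> Eb j ?o \<noteq> {}"
    then obtain e where "e \<in> Eb j off" "e \<in> Eb j ?o" by blast
    then have "e \<subseteq> Bk j off" "e \<subseteq> Bk j ?o" "card e = 2" using Eb_sub by blast+
    then show False using LR_disj by (metis card.empty disjoint_iff subset_iff zero_neq_numeral equals0I)
  qed
  have n1: "{off, ?m} \<notin> Eb j off \<union> Eb j ?o"
    using Eb_sub[of "{off, ?m}" j off] Eb_sub[of "{off, ?m}" j ?o] mid_notL[of off j] off_notR[of off j] by blast
  have n2: "{?m, ?o} \<notin> Eb j off \<union> Eb j ?o"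
    using Eb_sub[of "{?m, ?o}" j off] Eb_sub[of "{?m, ?o}" j ?o] mid_notL[of off j] mid_notR[of off j] by blast
  have n3: "{off, ?m} \<noteq> {?m, ?o}" by (auto simp: doubleton_eq_iff)
  have "Eb (Suc j) off = insert {off, ?m} (insert {?m, ?o} (Eb j off \<union> Eb j ?o))" by auto
  then have "card (Eb (Suc j) off) = Suc (Suc (card (Eb j off \<union> Eb j ?o)))"
    using n1 n2 n3 finite_Eb by (simp add: card_insert_if)
  also have "\<dots> = Suc (Suc (card (Eb j off) + card (Eb j ?o)))"
    using d1 finite_Eb by (simp add: card_Un_disjoint)
  finally show ?case using Suc N_pos[of j] by simp
qed



fun CT :: "nat \<Rightarrow> nat \<Rightarrow> nat stree" where
  "CT 0 off = Node off []"
| "CT (Suc j) off = Node (off + N j) [CT j off, CT j (Suc (off + N j))]"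

fun F :: "nat \<Rightarrow> nat \<Rightarrow> nat stree list" where
  "F 0 off = []"
| "F (Suc j) off = F j off @ [Node (Suc (off + N j)) (F j (Suc (off + N j)) @ [Node (off + N j) []])]"

lemma edge_in_block:
  assumes "isblk a K (Suc j) off s" "{x,y} \<in> Eb K 0" "x \<in> Bk (Suc j) off" "y \<in> Bk (Suc j) off"
  shows "{x,y} \<subseteq> Bk j off \<or> {x,y} \<subseteq> Bk j (Suc (off + N j)) \<or> {x,y} = {off, off + N j}
     \<or> {x,y} = {off + N j, Suc (off + N j)}"
proof -
  have "{x,y} \<in> Eb (Suc j) off" using isblk_edge[OF assms(1,2)] assms(3,4) by auto
  then show ?thesis using Eb_cases by blast
qed

lemma nE_LR:
  assumes "isblk a K (Suc j) off s" "x \<in> Bk j off" "y \<in> Bk j (Suc (off + N j))"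
  shows "{x,y} \<notin> Eb K 0"
proof
  assume e: "{x,y} \<in> Eb K 0"
  have "x \<in> Bk (Suc j) off" "y \<in> Bk (Suc j) off" using assms by (auto simp: B_Suc)
  note c = edge_in_block[OF assms(1) e this]
  have "x \<notin> Bk j (Suc (off + N j))" "y \<notin> Bk j off" using assms LR_disj' LR_disj'' by blast+
  moreover have "x \<noteq> off + N j" "y \<noteq> off + N j" "y \<noteq> off" using assms(2,3) by auto
  ultimately show False using c assms(2,3) by (auto simp: doubleton_eq_iff)
qed

lemma nE_L_mR:
  assumes "isblk a K (Suc j) off s" "x \<in> Bk j off" "x \<noteq> off" "y \<in> insert (off + N j) (Bk j (Suc (off + N j)))"
  shows "{x,y} \<notin> Eb K 0"
proof
  assume e: "{x,y} \<in> Eb K 0"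
  have "x \<in> Bk (Suc j) off" "y \<in> Bk (Suc j) off" using assms by (auto simp: B_Suc)
  note c = edge_in_block[OF assms(1) e this]
  have "x \<notin> Bk j (Suc (off + N j))" using assms LR_disj' by blast
  moreover have "y \<notin> Bk j off" using assms(4) LR_disj'' mid_notL by blast
  moreover have "x \<noteq> off + N j" "x \<noteq> Suc (off + N j)" using assms(2) by (auto simp: Bk_def)
  ultimately show False using c assms(3) by (auto simp: doubleton_eq_iff)
qed

lemma nE_Rm:
  assumes "isblk a K (Suc j) off s" "x \<in> Bk j (Suc (off + N j))" "x \<noteq> Suc (off + N j)"
  shows "{x, off + N j} \<notin> Eb K 0"
proof
  assume e: "{x, off + N j} \<in> Eb K 0"
  have "x \<in> Bk (Suc j) off" "off + N j \<in> Bk (Suc j) off" using assms by (auto simp: B_Suc)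
  note c = edge_in_block[OF assms(1) e this]
  have "x \<noteq> off" using assms(2) by (auto simp: Bk_def)
  then show False using c assms(3) by (auto simp: doubleton_eq_iff)
qed

lemma conn_E: "isblk a K j off s \<Longrightarrow> \<forall>x\<in>Bk j off. \<forall>y\<in>Bk j off. (x,y) \<in> (adj (Eb K 0) (Bk j off))\<^sup>*"
proof -
  assume "isblk a K j off s"
  then have "(adj (Eb j off) (Bk j off))\<^sup>* \<subseteq> (adj (Eb K 0) (Bk j off))\<^sup>*"
    using isblk_mono by (intro rtrancl_mono adj_mono) auto
  then show ?thesis using conn_Bk by blast
qed

lemma comps_blk: "isblk a K j off s \<Longrightarrow> comps (Eb K 0) (Bk j off) = {Bk j off}"
proof -
  assume b: "isblk a K j off s"
  have "Bk j off \<noteq> {}" using off_in[of off j] by blast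
  then show ?thesis using conn_E[OF b] by (intro comps_conn) auto
qed

lemma comps_mid:
  assumes "isblk a K (Suc j) off s"
  shows "comps (Eb K 0) (Bk (Suc j) off - {off + N j}) = {Bk j off, Bk j (Suc (off + N j))}"
proof -
  have eq: "Bk (Suc j) off - {off + N j} = Bk j off \<union> Bk j (Suc (off + N j))"
    by (auto simp: B_Suc)
  have "comps (Eb K 0) (Bk j off \<union> Bk j (Suc (off + N j))) = comps (Eb K 0) (Bk j off) \<union> comps (Eb K 0) (Bk j (Suc (off + N j)))"
    using LR_disj nE_LR[OF assms] by (intro comps_split) auto
  then show ?thesis unfolding eq using comps_blk isblk.left[OF assms] isblk.right[OF assms] by (simp add: insert_commute)
qed

lemma CT_search: "isblk a K j off s \<Longrightarrow> is_search_tree (Eb K 0) (Bk j off) (CT j off)"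
proof (induction j arbitrary: off s)
  case 0
  then show ?case by (simp add: Bk_def)
next
  case (Suc j)
  have L: "isblk a K j off (a * s)" and R: "isblk a K j (Suc (off + N j)) ((1 - a) * s)"
    using Suc.prems isblk.left isblk.right by blast+
  have vL: "verts (CT j off) = Bk j off" using Suc.IH[OF L] search_verts by blast
  have vR: "verts (CT j (Suc (off + N j))) = Bk j (Suc (off + N j))" using Suc.IH[OF R] search_verts by blast
  have ne: "Bk j off \<noteq> Bk j (Suc (off + N j))" using off_in[of off j] off_notR[of off j] by blast
  show ?case using vL vR ne comps_mid[OF Suc.prems] Suc.IH[OF L] Suc.IH[OF R]
    by (auto simp: B_Suc)
qed



lemma conn_mR:
  assumes b: "isblk a K (Suc j) off s"
  shows "\<forall>x\<in>insert (off + N j) (Bk j (Suc (off + N j))). \<forall>y\<in>insert (off + N j) (Bk j (Suc (off + N j))).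
          (x,y) \<in> (adj (Eb K 0) (insert (off + N j) (Bk j (Suc (off + N j)))))\<^sup>*"
proof -
  let ?m = "off + N j" and ?o = "Suc (off + N j)"
  let ?S = "insert ?m (Bk j ?o)"
  let ?r = "adj (Eb K 0) ?S"
  have R: "isblk a K j ?o ((1 - a) * s)" using isblk.right[OF b] .
  have "(adj (Eb K 0) (Bk j ?o))\<^sup>* \<subseteq> ?r\<^sup>*" by (intro rtrancl_mono adj_mono) auto
  then have cR: "\<forall>x\<in>Bk j ?o. \<forall>y\<in>Bk j ?o. (x,y) \<in> ?r\<^sup>*" using conn_E[OF R] by blast
  have "{?m, ?o} \<in> Eb K 0" using isblk_mono[OF b] by auto
  then have e: "(?m, ?o) \<in> ?r" "(?o, ?m) \<in> ?r" unfolding adj_def using off_in[of ?o j]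
    by (auto simp: insert_commute)
  have o: "?o \<in> Bk j ?o" by (rule off_in)
  have to: "(?m, x) \<in> ?r\<^sup>*" if xS: "x \<in> ?S" for x
  proof (cases "x = ?m")
    case True then show ?thesis by simp
  next
    case False then have "x \<in> Bk j ?o" using xS by blast
    then have "(?o, x) \<in> ?r\<^sup>*" using cR o by blast
    then show ?thesis using e by (meson converse_rtrancl_into_rtrancl)
  qed
  have fr: "(x, ?m) \<in> ?r\<^sup>*" if xS: "x \<in> ?S" for x
  proof (cases "x = ?m")
    case True then show ?thesis by simp
  next
    case False then have "x \<in> Bk j ?o" using xS by blast
    then have "(x, ?o) \<in> ?r\<^sup>*" using cR o by blast
    then show ?thesis using e by (meson rtrancl_into_rtrancl)
  qed
  show ?thesis using to fr by (meson rtrancl_trans)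
qed

lemma leaf_search: "is_search_tree E {m} (Node m [])"
  by simp

lemma OT_search: "isblk a K j off s \<Longrightarrow> is_search_tree (Eb K 0) (Bk j off) (Node off (F j off))"
proof (induction j arbitrary: off s)
  case 0
  then show ?case by (simp add: Bk_def)
next
  case (Suc j)
  let ?m = "off + N j" and ?o = "Suc (off + N j)"
  let ?E = "Eb K 0"
  let ?X = "Node ?o (F j ?o @ [Node ?m []])"
  have b: "isblk a K (Suc j) off s" by fact
  have L: "isblk a K j off (a * s)" and R: "isblk a K j ?o ((1 - a) * s)"
    using Suc.prems isblk.left isblk.right by blast+
  note IL = Suc.IH[OF L] and IR = Suc.IH[OF R]
  have IL1: "distinct (map verts (F j off))" "set (map verts (F j off)) = comps ?E (Bk j off - {off})"
     "\<forall>t\<in>set (F j off). is_search_tree ?E (verts t) t" using IL by auto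
  have IR1: "distinct (map verts (F j ?o))" "set (map verts (F j ?o)) = comps ?E (Bk j ?o - {?o})"
     "\<forall>t\<in>set (F j ?o). is_search_tree ?E (verts t) t" using IR by auto
  have mnot: "{?m} \<notin> set (map verts (F j ?o))"
  proof
    assume "{?m} \<in> set (map verts (F j ?o))"
    then have "{?m} \<subseteq> Bk j ?o - {?o}" using IR1(2) comps_sub by metis
    then show False using mid_notR[of off j] by blast
  qed
  have eqX: "insert ?m (Bk j ?o) - {?o} = (Bk j ?o - {?o}) \<union> {?m}" by auto
  have cX: "comps ?E (insert ?m (Bk j ?o) - {?o}) = comps ?E (Bk j ?o - {?o}) \<union> {{?m}}"
  proof -
    have "comps ?E ((Bk j ?o - {?o}) \<union> {?m}) = comps ?E (Bk j ?o - {?o}) \<union> comps ?E {?m}"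
      using nE_Rm[OF b] mid_notR[of off j] by (intro comps_split) auto
    then show ?thesis unfolding eqX by simp
  qed
  have sX: "is_search_tree ?E (insert ?m (Bk j ?o)) ?X"
    using IR1 mnot cX by auto
  have vX: "verts ?X = insert ?m (Bk j ?o)" using search_verts[OF sX] .
  have Xnot: "insert ?m (Bk j ?o) \<notin> set (map verts (F j off))"
  proof
    assume "insert ?m (Bk j ?o) \<in> set (map verts (F j off))"
    then have "insert ?m (Bk j ?o) \<subseteq> Bk j off - {off}" using IL1(2) comps_sub by metis
    then show False using mid_notL[of off j] by blast
  qed
  have eqT: "Bk (Suc j) off - {off} = (Bk j off - {off}) \<union> insert ?m (Bk j ?o)"
    using off_notR[of off j] N_pos[of j] by (auto simp: B_Suc)
  have cT: "comps ?E (Bk (Suc j) off - {off}) = comps ?E (Bk j off - {off}) \<union> {insert ?m (Bk j ?o)}"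
  proof -
    have d: "(Bk j off - {off}) \<inter> insert ?m (Bk j ?o) = {}" using LR_disj[of j off] by auto
    have "comps ?E ((Bk j off - {off}) \<union> insert ?m (Bk j ?o)) = comps ?E (Bk j off - {off}) \<union> comps ?E (insert ?m (Bk j ?o))"
      using d nE_L_mR[OF b] N_pos[of j] by (intro comps_split) auto
    moreover have "comps ?E (insert ?m (Bk j ?o)) = {insert ?m (Bk j ?o)}"
      using conn_mR[OF b] by (intro comps_conn) auto
    ultimately show ?thesis unfolding eqT by simp
  qed
  show ?case using IL1 Xnot cT sX vX by (auto simp: B_Suc)
qed

lemma OT_verts: "isblk a K j off s \<Longrightarrow> verts (Node off (F j off)) = Bk j off"
  using OT_search search_verts by blast

lemma CT_verts: "isblk a K j off s \<Longrightarrow> verts (CT j off) = Bk j off"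
  using CT_search search_verts by blast



lemma CT_verts': "verts (CT j off) = Bk j off"
  by (induction j arbitrary: off) (auto simp: B_Suc Bk_def)

lemma verts_snoc: "verts (Node r (ts @ [t])) = verts (Node r ts) \<union> verts t"
  by auto

lemma OT_verts': "verts (Node off (F j off)) = Bk j off"
proof (induction j arbitrary: off)
  case 0 then show ?case by (simp add: Bk_def)
next
  case (Suc j)
  have "verts (Node off (F (Suc j) off)) = verts (Node off (F j off)) \<union> (verts (Node (Suc (off + N j)) (F j (Suc (off + N j)))) \<union> {off + N j})"
    unfolding F.simps verts_snoc by simp
  also have "\<dots> = Bk (Suc j) off" unfolding Suc.IH B_Suc by blast
  finally show ?case .
qed

lemma cost_snoc: "cost w (Node r (ts @ [t])) = cost w (Node r ts) + cost w t + tw w t"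
  by (simp add: cost_Node)

lemma tw_snoc: "tw w (Node r (ts @ [t])) = tw w (Node r ts) + tw w t"
  by (simp add: tw_Node)

lemma wt_Suc_fun: "wt a (Suc j) off s = (\<lambda>x. wt a j off (a * s) x + wt a j (Suc (off + N j)) ((1 - a) * s) x)"
  by (rule ext) simp

lemma wt_zero_on: "A \<inter> Bk j off = {} \<Longrightarrow> \<forall>x\<in>A. wt a j off s x = 0"
  using wt_out by blast

lemma cost_CT: "cost (wt a j off s) (CT j off) = s * (1 + real j) \<and> tw (wt a j off s) (CT j off) = s"
proof (induction j arbitrary: off s)
  case 0 then show ?case by (simp add: cost_Node tw_Node)
next
  case (Suc j)
  let ?m = "off + N j" and ?o = "Suc (off + N j)"
  let ?wl = "wt a j off (a * s)" and ?wr = "wt a j ?o ((1 - a) * s)"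
  have z1: "\<forall>x\<in>verts (CT j ?o). ?wl x = 0" unfolding CT_verts' using wt_out[of _ j off] LR_disj''[of _ j off] by blast
  have z2: "\<forall>x\<in>verts (CT j off). ?wr x = 0" unfolding CT_verts' using wt_out[of _ j ?o] LR_disj'[of _ j off] by blast
  have m1: "?wl ?m = 0" "?wr ?m = 0" using wt_out[of ?m j off] wt_out[of ?m j ?o] mid_notL[of off j] mid_notR[of off j] by blast+
  have cl: "cost ?wl (CT (Suc j) off) = a * s * (1 + real j) + a * s"
    using Suc[of off "a * s"] cost_zero[OF z1] tw_zero[OF z1] m1 by (simp add: cost_Node)
  have cr: "cost ?wr (CT (Suc j) off) = (1 - a) * s * (1 + real j) + (1 - a) * s"
    using Suc[of ?o "(1 - a) * s"] cost_zero[OF z2] tw_zero[OF z2] m1 by (simp add: cost_Node)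
  have tl: "tw ?wl (CT (Suc j) off) = a * s"
    using Suc[of off "a * s"] tw_zero[OF z1] m1 by (simp add: tw_Node)
  have tr: "tw ?wr (CT (Suc j) off) = (1 - a) * s"
    using Suc[of ?o "(1 - a) * s"] tw_zero[OF z2] m1 by (simp add: tw_Node)
  let ?T = "CT (Suc j) off" and ?rhs = "s * (1 + real (Suc j))"
  have c: "cost (wt a (Suc j) off s) (CT (Suc j) off) = cost ?wl (CT (Suc j) off) + cost ?wr (CT (Suc j) off)"
    by (simp only: wt_Suc_fun cost_add)
  have t: "tw (wt a (Suc j) off s) (CT (Suc j) off) = tw ?wl (CT (Suc j) off) + tw ?wr (CT (Suc j) off)"
    by (simp only: wt_Suc_fun tw_add)
  have e1: "a * s * (1 + real j) + a * s + ((1 - a) * s * (1 + real j) + (1 - a) * s) = s * (1 + real (Suc j))"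
    by (simp add: algebra_simps)
  have e2: "a * s + (1 - a) * s = s" by (simp add: algebra_simps)
  have A: "cost (wt a (Suc j) off s) ?T = ?rhs" unfolding c cl cr by (rule e1)
  have B: "tw (wt a (Suc j) off s) ?T = s" unfolding t tl tr by (rule e2)
  show ?case using A B by blast
qed

lemma cost_OT: "cost (wt a j off s) (Node off (F j off)) = s * (1 + real j * (1 - a))
   \<and> tw (wt a j off s) (Node off (F j off)) = s"
proof (induction j arbitrary: off s)
  case 0 then show ?case by (simp add: cost_Node tw_Node)
next
  case (Suc j)
  let ?m = "off + N j" and ?o = "Suc (off + N j)"
  let ?wl = "wt a j off (a * s)" and ?wr = "wt a j ?o ((1 - a) * s)"
  let ?X = "Node ?o (F j ?o @ [Node ?m []])"
  have vX: "verts ?X = insert ?m (Bk j ?o)"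
    using OT_verts'[of ?o j] by auto
  have z1: "\<forall>x\<in>verts ?X. ?wl x = 0" unfolding vX
    using wt_out[of _ j off] LR_disj''[of _ j off] mid_notL[of off j] by blast
  have z2: "\<forall>x\<in>verts (Node off (F j off)). ?wr x = 0" unfolding OT_verts' using wt_out[of _ j ?o] LR_disj'[of _ j off] by blast
  have m1: "?wl ?m = 0" "?wr ?m = 0" using wt_out[of ?m j off] wt_out[of ?m j ?o] mid_notL[of off j] mid_notR[of off j] by blast+
  have cX: "cost ?wr ?X = (1 - a) * s * (1 + real j * (1 - a))" "tw ?wr ?X = (1 - a) * s"
    using Suc[of ?o "(1 - a) * s"] m1 by (simp_all add: cost_snoc tw_snoc cost_Node tw_Node)
  have cl: "cost ?wl (Node off (F (Suc j) off)) = a * s * (1 + real j * (1 - a))"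
    using Suc[of off "a * s"] cost_zero[OF z1] tw_zero[OF z1] by (simp add: cost_snoc)
  have cr: "cost ?wr (Node off (F (Suc j) off)) = (1 - a) * s * (1 + real j * (1 - a)) + (1 - a) * s"
    using cX cost_zero[OF z2] by (simp add: cost_snoc)
  have tl: "tw ?wl (Node off (F (Suc j) off)) = a * s"
    using Suc[of off "a * s"] tw_zero[OF z1] by (simp add: tw_snoc)
  have tr: "tw ?wr (Node off (F (Suc j) off)) = (1 - a) * s"
    using cX tw_zero[OF z2] by (simp add: tw_snoc)
  let ?T = "Node off (F (Suc j) off)" and ?rhs = "s * (1 + real (Suc j) * (1 - a))"
  have c: "cost (wt a (Suc j) off s) (Node off (F (Suc j) off)) = cost ?wl (Node off (F (Suc j) off)) + cost ?wr (Node off (F (Suc j) off))"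
    by (simp only: wt_Suc_fun cost_add)
  have t: "tw (wt a (Suc j) off s) (Node off (F (Suc j) off)) = tw ?wl (Node off (F (Suc j) off)) + tw ?wr (Node off (F (Suc j) off))"
    by (simp only: wt_Suc_fun tw_add)
  have e1: "a * s * (1 + real j * (1 - a)) + ((1 - a) * s * (1 + real j * (1 - a)) + (1 - a) * s) = s * (1 + real (Suc j) * (1 - a))"
    by (simp add: algebra_simps)
  have e2: "a * s + (1 - a) * s = s" by (simp add: algebra_simps)
  have A: "cost (wt a (Suc j) off s) ?T = ?rhs" unfolding c cl cr by (rule e1)
  have B: "tw (wt a (Suc j) off s) ?T = s" unfolding t tl tr by (rule e2)
  show ?case using A B by blast
qed

lemma wsum_blk: "isblk a K j off s \<Longrightarrow> wsum (wt a K 0 1) (Bk j off) = s"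
proof -
  assume b: "isblk a K j off s"
  have "wsum (wt a K 0 1) (Bk j off) = sum (wt a j off s) (Bk j off)"
    unfolding wsum_def using isblk_wt[OF b] by (rule sum.cong[OF refl])
  then show ?thesis using wsum_wt by simp
qed

lemma CT_centroid:
  assumes a: "1/2 \<le> a" "a \<le> 1"
  shows "isblk a K j off s \<Longrightarrow> \<forall>u\<in>set (subtrees (CT j off)). is_centroid a (Eb K 0) (wt a K 0 1) (verts u) (root u)"
proof (induction j arbitrary: off s)
  case 0 then show ?case by (simp add: is_centroid_def)
next
  case (Suc j)
  let ?m = "off + N j" and ?o = "Suc (off + N j)"
  have b: "isblk a K (Suc j) off s" by fact
  have L: "isblk a K j off (a * s)" and R: "isblk a K j ?o ((1 - a) * s)"
    using Suc.prems isblk.left isblk.right by blast+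
  have s0: "0 \<le> s" using isblk_s[OF b] a by auto
  have top: "is_centroid a (Eb K 0) (wt a K 0 1) (Bk (Suc j) off) ?m"
  proof -
    have "wsum (wt a K 0 1) (Bk j off) \<le> a * wsum (wt a K 0 1) (Bk (Suc j) off)"
      unfolding wsum_blk[OF L] wsum_blk[OF b] by simp
    moreover have "wsum (wt a K 0 1) (Bk j ?o) \<le> a * wsum (wt a K 0 1) (Bk (Suc j) off)"
      unfolding wsum_blk[OF R] wsum_blk[OF b] using s0 a by (intro mult_right_mono) auto
    moreover have "?m \<in> Bk (Suc j) off" by (simp add: B_Suc)
    ultimately show ?thesis unfolding is_centroid_def comps_mid[OF b] by blast
  qed
  show ?case using top Suc.IH[OF L] Suc.IH[OF R] CT_verts'[of "Suc j" off] by auto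
qed



lemma wt_nonneg_top: "0 \<le> a \<Longrightarrow> a \<le> 1 \<Longrightarrow> \<forall>x. 0 \<le> wt a K 0 1 x"
  using wt_nonneg by auto

lemma blk_in_child:
  assumes st: "is_search_tree E S (Node r ts)"
    and A: "A \<subseteq> S" "r \<notin> A" "off \<in> A" "\<forall>x\<in>A. \<forall>y\<in>A. (x,y) \<in> (adj E A)\<^sup>*"
  shows "\<exists>t\<in>set ts. A \<subseteq> verts t"
proof -
  let ?C = "{y. (off, y) \<in> (adj E (S - {r}))\<^sup>*}"
  have "off \<in> S - {r}" using A by auto
  then have "?C \<in> comps E (S - {r})" unfolding comps_def by blast
  then have "?C \<in> set (map verts ts)" using st by simp
  then obtain t where t: "t \<in> set ts" "verts t = ?C" by auto
  have "(adj E A)\<^sup>* \<subseteq> (adj E (S - {r}))\<^sup>*" using A by (intro rtrancl_mono adj_mono) auto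
  then have "A \<subseteq> ?C" using A(3,4) by blast
  then show ?thesis using t by auto
qed

lemma LB:
  assumes a: "1/2 \<le> a" "a \<le> 1"
  shows "is_search_tree (Eb K 0) S T \<Longrightarrow> \<forall>j off s. isblk a K j off s \<longrightarrow> Bk j off \<subseteq> S \<longrightarrow>
     s * (1 + real j * (1 - a)) \<le> phi (wt a K 0 1) (Bk j off) T \<and> s \<le> psi (wt a K 0 1) (Bk j off) T"
proof (induction T arbitrary: S)
  case (Node r ts)
  let ?w = "wt a K 0 1" and ?E = "Eb K 0"
  have wnn: "\<forall>x. 0 \<le> ?w x" using wt_nonneg_top a by auto
  have st: "is_search_tree ?E S (Node r ts)" by fact
  have notin: "s * (1 + real j * (1 - a)) + s \<le> phi ?w (Bk j off) (Node r ts) \<and> s \<le> psi ?w (Bk j off) (Node r ts)"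
    if b: "isblk a K j off s" and sub: "Bk j off \<subseteq> S" and rn: "r \<notin> Bk j off" for j off s
  proof -
    obtain t where t: "t \<in> set ts" "Bk j off \<subseteq> verts t"
      using blk_in_child[OF st sub rn off_in conn_E[OF b]] by blast
    have stt: "is_search_tree ?E (verts t) t" using st t(1) by simp
    have IH: "s * (1 + real j * (1 - a)) \<le> phi ?w (Bk j off) t \<and> s \<le> psi ?w (Bk j off) t"
      using Node.IH[OF t(1) stt] b t(2) by blast
    have nn: "\<forall>u\<in>set ts. 0 \<le> phi ?w (Bk j off) u + psi ?w (Bk j off) u"
      using phi_nonneg[OF wnn] psi_nonneg[OF wnn] by (simp add: add_nonneg_nonneg)
    have "phi ?w (Bk j off) t + psi ?w (Bk j off) t \<le> phi ?w (Bk j off) (Node r ts)"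
      unfolding phi_Node using rn member_le_sum_list_nonneg[OF t(1) nn] by simp
    moreover have "psi ?w (Bk j off) t \<le> psi ?w (Bk j off) (Node r ts)"
      unfolding psi_Node using rn member_le_sum_list_nonneg[OF t(1)] psi_nonneg[OF wnn] by simp
    ultimately show ?thesis using IH by linarith
  qed
  have main: "\<forall>off s. isblk a K j off s \<longrightarrow> Bk j off \<subseteq> S \<longrightarrow>
     s * (1 + real j * (1 - a)) \<le> phi ?w (Bk j off) (Node r ts) \<and> s \<le> psi ?w (Bk j off) (Node r ts)" for j
  proof (induction j)
    case 0
    show ?case
    proof (intro allI impI)
      fix off s assume b: "isblk a K 0 off s" and sub: "Bk 0 off \<subseteq> S"
      show "s * (1 + real 0 * (1 - a)) \<le> phi ?w (Bk 0 off) (Node r ts) \<and> s \<le> psi ?w (Bk 0 off) (Node r ts)"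
      proof (cases "r \<in> Bk 0 off")
        case False then show ?thesis using notin[OF b sub] isblk_s[OF b] a by auto
      next
        case True
        then have r: "r = off" by (simp add: Bk_def)
        have wr: "?w r = s" using isblk_wt[OF b, of r] True r by simp
        have "0 \<le> sum_list (map (\<lambda>t. phi ?w (Bk 0 off) t + psi ?w (Bk 0 off) t) ts)"
          using phi_nonneg[OF wnn] psi_nonneg[OF wnn] by (intro sum_list_nonneg) (auto intro: add_nonneg_nonneg)
        moreover have "0 \<le> sum_list (map (psi ?w (Bk 0 off)) ts)"
          using psi_nonneg[OF wnn] by (intro sum_list_nonneg) auto
        ultimately show ?thesis unfolding phi_Node psi_Node using True wr by simp
      qed
    qed
  next
    case (Suc j)
    show ?case
    proof (intro allI impI)
      fix off s assume b: "isblk a K (Suc j) off s" and sub: "Bk (Suc j) off \<subseteq> S"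
      let ?m = "off + N j" and ?o = "Suc (off + N j)"
      let ?L = "Bk j off" and ?R = "Bk j ?o"
      have L: "isblk a K j off (a * s)" and R: "isblk a K j ?o ((1 - a) * s)"
        using b isblk.left isblk.right by blast+
      have subL: "?L \<subseteq> S" and subR: "?R \<subseteq> S" using sub by (auto simp: B_Suc)
      have s0: "0 \<le> s" using isblk_s[OF b] a by auto
      show "s * (1 + real (Suc j) * (1 - a)) \<le> phi ?w (Bk (Suc j) off) (Node r ts) \<and> s \<le> psi ?w (Bk (Suc j) off) (Node r ts)"
      proof (cases "r \<in> Bk (Suc j) off")
        case False
        then show ?thesis using notin[OF b sub] s0 by auto
      next
        case True
        have eqB: "Bk (Suc j) off = ?L \<union> ({?m} \<union> ?R)" by (simp add: B_Suc)
        have d1: "?L \<inter> ({?m} \<union> ?R) = {}" using LR_disj[of j off] by auto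
        have d2: "{?m} \<inter> ?R = {}" by auto
        let ?T = "Node r ts"
        have ph: "phi ?w (Bk (Suc j) off) ?T = phi ?w ?L ?T + phi ?w {?m} ?T + phi ?w ?R ?T"
          unfolding eqB phi_union[OF d1] phi_union[OF d2] by simp
        have ps: "psi ?w (Bk (Suc j) off) ?T = psi ?w ?L ?T + psi ?w {?m} ?T + psi ?w ?R ?T"
          unfolding eqB psi_union[OF d1] psi_union[OF d2] by simp
        have pm: "0 \<le> phi ?w {?m} ?T" "0 \<le> psi ?w {?m} ?T" using phi_nonneg[OF wnn] psi_nonneg[OF wnn] by auto
        have IHL: "a * s * (1 + real j * (1 - a)) \<le> phi ?w ?L ?T \<and> a * s \<le> psi ?w ?L ?T"
          using Suc.IH L subL by blast
        have IHR: "(1 - a) * s * (1 + real j * (1 - a)) \<le> phi ?w ?R ?T \<and> (1 - a) * s \<le> psi ?w ?R ?T"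
          using Suc.IH R subR by blast
        have e1: "a * s * (1 + real j * (1 - a)) + (1 - a) * s * (1 + real j * (1 - a)) + (1 - a) * s
                  = s * (1 + real (Suc j) * (1 - a))" by (simp add: algebra_simps)
        have e2: "a * s + (1 - a) * s = s" by (simp add: algebra_simps)
        have as: "(1 - a) * s \<le> a * s" using a s0 by (intro mult_right_mono) auto
        show ?thesis
        proof (cases "r \<in> ?R")
          case True
          then have rL: "r \<notin> ?L" using LR_disj'' by blast
          have "a * s * (1 + real j * (1 - a)) + a * s \<le> phi ?w ?L ?T"
            using notin[OF L subL rL] by blast
          then have A: "a * s * (1 + real j * (1 - a)) + a * s + (1 - a) * s * (1 + real j * (1 - a)) \<le> phi ?w (Bk (Suc j) off) ?T"
            using ph pm IHR by linarith
          have "s * (1 + real (Suc j) * (1 - a)) \<le> phi ?w (Bk (Suc j) off) ?T"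
            using A e1 as by linarith
          moreover have "s \<le> psi ?w (Bk (Suc j) off) ?T" using ps pm IHL IHR e2 by linarith
          ultimately show ?thesis by blast
        next
          case False
          have "(1 - a) * s * (1 + real j * (1 - a)) + (1 - a) * s \<le> phi ?w ?R ?T"
            using notin[OF R subR False] by blast
          then have "s * (1 + real (Suc j) * (1 - a)) \<le> phi ?w (Bk (Suc j) off) ?T"
            using ph pm IHL e1 by linarith
          moreover have "s \<le> psi ?w (Bk (Suc j) off) ?T" using ps pm IHL IHR e2 by linarith
          ultimately show ?thesis by blast
        qed
      qed
    qed
  qed
  show ?case using main by blast
qed



fun gb :: "nat \<Rightarrow> nat" where
  "gb 0 = 1" | "gb (Suc n) = 1 + 2 ^ n * gb n"

lemma gb_mono: "m \<le> n \<Longrightarrow> gb m \<le> gb n"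
proof -
  have "gb n \<le> gb (Suc n)" for n
  proof -
    have "1 \<le> (2::nat) ^ n" by simp
    then have "gb n \<le> 2 ^ n * gb n" by simp
    then show ?thesis by (simp add: le_SucI)
  qed
  then show "m \<le> n \<Longrightarrow> gb m \<le> gb n" by (rule lift_Suc_mono_le)
qed

lemma sum_list_le_len:
  fixes f :: "'b \<Rightarrow> nat"
  shows "\<forall>t\<in>set ts. f t \<le> M \<Longrightarrow> sum_list (map f ts) \<le> length ts * M"
  by (induction ts) auto

lemma depth_bound:
  "is_search_tree E S T \<Longrightarrow> finite S \<Longrightarrow> (\<forall>p\<in>set (depths T). snd p \<le> card S) \<and> length (depths T) \<le> gb (card S)"
proof (induction T arbitrary: S)
  case (Node r ts)
  have rS: "r \<in> S" using Node.prems by simp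
  define n where "n = card (S - {r})"
  have c1: "card (S - {r}) = card S - 1" using rS Node.prems(2) by (simp add: card_Diff_singleton)
  have c2: "0 < card S" using rS Node.prems(2) card_gt_0_iff by blast
  have cS: "card S = Suc n" unfolding n_def using c1 c2 by linarith
  have ch: "t \<in> set ts \<Longrightarrow> (\<forall>p\<in>set (depths t). snd p \<le> n) \<and> length (depths t) \<le> gb n" for t
  proof -
    assume t: "t \<in> set ts"
    have st: "is_search_tree E (verts t) t" and sub: "verts t \<subseteq> S - {r}"
      using search_child[OF Node.prems(1) t] by blast+
    have fin: "finite (verts t)" using sub Node.prems(2) finite_subset by blast
    have c: "card (verts t) \<le> n" unfolding n_def using sub Node.prems(2) by (simp add: card_mono)
    have "(\<forall>p\<in>set (depths t). snd p \<le> card (verts t)) \<and> length (depths t) \<le> gb (card (verts t))"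
      using Node.IH[OF t st fin] .
    then show ?thesis using c gb_mono[OF c] by fastforce
  qed
  have len_ts: "length ts \<le> 2 ^ n"
  proof -
    have "length ts = length (map verts ts)" by simp
    also have "\<dots> = card (set (map verts ts))"
      using Node.prems(1) distinct_card[of "map verts ts"] by (simp only: is_search_tree.simps)
    also have "\<dots> \<le> card (Pow (S - {r}))"
    proof (rule card_mono)
      show "finite (Pow (S - {r}))" using Node.prems(2) by simp
      show "set (map verts ts) \<subseteq> Pow (S - {r})" using Node.prems(1) comps_sub by fastforce
    qed
    also have "\<dots> = 2 ^ n" unfolding n_def using Node.prems(2) by (simp add: card_Pow)
    finally show ?thesis .
  qed
  have "length (depths (Node r ts)) = 1 + sum_list (map (\<lambda>t. length (depths t)) ts)"
    by (simp add: length_concat o_def)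
  also have "\<dots> \<le> 1 + length ts * gb n"
    using sum_list_le_len[of ts "\<lambda>t. length (depths t)" "gb n"] ch by auto
  also have "\<dots> \<le> 1 + 2 ^ n * gb n" using len_ts by simp
  finally have l: "length (depths (Node r ts)) \<le> gb (card S)" unfolding cS by simp
  have d: "\<forall>p\<in>set (depths (Node r ts)). snd p \<le> card S"
    using ch unfolding cS by fastforce
  show ?case using l d by blast
qed

lemma sum_list_le_len_real:
  fixes f :: "'b \<Rightarrow> real"
  shows "\<forall>t\<in>set ts. f t \<le> M \<Longrightarrow> sum_list (map f ts) \<le> real (length ts) * M"
  by (induction ts) (auto simp: algebra_simps)

lemma cost_bound:
  assumes "is_search_tree E S T" "finite S" "\<forall>x. 0 \<le> w x \<and> w x \<le> 1"
  shows "cost w T \<le> real (gb (card S)) * real (card S)"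
proof -
  note db = depth_bound[OF assms(1,2)]
  have "\<forall>p\<in>set (depths T). (\<lambda>(x, d). w x * real d) p \<le> real (card S)"
  proof
    fix p assume p: "p \<in> set (depths T)"
    obtain x d where pd: "p = (x, d)" by (cases p)
    have "d \<le> card S" using db p pd by auto
    moreover have "0 \<le> w x" "w x \<le> 1" using assms(3) by auto
    ultimately have "w x * real d \<le> 1 * real (card S)" by (intro mult_mono) auto
    then show "(\<lambda>(x, d). w x * real d) p \<le> real (card S)" using pd by simp
  qed
  then have "cost w T \<le> real (length (depths T)) * real (card S)"
    unfolding cost_def by (rule sum_list_le_len_real)
  also have "\<dots> \<le> real (gb (card S)) * real (card S)"
    using db by (intro mult_right_mono) auto
  finally show ?thesis .
qed



theorem theorem8:
  fixes \<alpha> :: real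
  assumes "1/2 \<le> \<alpha>" and "\<alpha> < 1"
  shows "\<exists>(V :: nat \<Rightarrow> nat set) (E :: nat \<Rightarrow> nat set set) (w :: nat \<Rightarrow> nat \<Rightarrow> real).
    (\<forall>n. is_tree (V n) (E n) \<and> (\<forall>x\<in>V n. 0 \<le> w n x) \<and> wsum (w n) (V n) = 1 \<and>
         cent \<alpha> (V n) (E n) (w n) \<ge> 1 / (1 - \<alpha>) * OPT (V n) (E n) (w n) - \<alpha> / (1 - \<alpha>)) \<and>
    filterlim (\<lambda>n. OPT (V n) (E n) (w n)) at_top sequentially"
proof -
  have a1: "0 \<le> \<alpha>" "\<alpha> \<le> 1" using assms by auto
  have c0: "0 < 1 - \<alpha>" using assms by simp
  define V where "V = (\<lambda>n. Bk n 0)"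
  define E where "E = (\<lambda>n. Eb n 0)"
  define w where "w = (\<lambda>n. wt \<alpha> n 0 1)"
  have wb: "\<forall>x. 0 \<le> w n x \<and> w n x \<le> 1" for n
    unfolding w_def using wt_nonneg[OF a1] wt_le[OF a1] by auto
  have blk: "isblk \<alpha> n n 0 1" for n by (rule isblk.top)
  have tree: "is_tree (V n) (E n)" for n
  proof -
    have "\<forall>e\<in>E n. e \<subseteq> V n \<and> card e = 2" unfolding E_def V_def using Eb_sub by blast
    moreover have "card (E n) = card (V n) - 1" unfolding E_def V_def by (simp add: card_Eb card_Bk)
    moreover have "V n \<noteq> {}" unfolding V_def using off_in by blast
    ultimately show ?thesis unfolding is_tree_def using conn_Bk[of n 0] by (simp add: V_def E_def)
  qed
  have ws: "wsum (w n) (V n) = 1" for n unfolding wsum_def w_def V_def by (rule wsum_wt)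
  have costs_nonempty: "{cost (w n) T | T. is_search_tree (E n) (V n) T} \<noteq> {}" for n
    using OT_search[OF blk] unfolding E_def V_def by blast
  have opt_le: "OPT (V n) (E n) (w n) \<le> 1 + real n * (1 - \<alpha>)" for n
  proof -
    have "OPT (V n) (E n) (w n) \<le> cost (w n) (Node 0 (F n 0))"
      unfolding OPT_def
    proof (rule cInf_lower)
      show "cost (w n) (Node 0 (F n 0)) \<in> {cost (w n) T |T. is_search_tree (E n) (V n) T}"
        using OT_search[OF blk] unfolding E_def V_def by blast
      show "bdd_below {cost (w n) T |T. is_search_tree (E n) (V n) T}"
      proof (rule bdd_belowI)
        fix x assume "x \<in> {cost (w n) T |T. is_search_tree (E n) (V n) T}"
        then obtain T where "x = cost (w n) T" by blast
        moreover have "\<forall>y. 0 \<le> w n y" using wb by blast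
        ultimately show "0 \<le> x" using cost_nonneg by simp
      qed
    qed
    also have "\<dots> = 1 + real n * (1 - \<alpha>)" unfolding w_def using cost_OT[of \<alpha> n 0 1] by simp
    finally show ?thesis .
  qed
  have opt_ge: "1 + real n * (1 - \<alpha>) \<le> OPT (V n) (E n) (w n)" for n
    unfolding OPT_def
  proof (rule cInf_greatest[OF costs_nonempty])
    fix x assume "x \<in> {cost (w n) T |T. is_search_tree (E n) (V n) T}"
    then obtain T where T: "is_search_tree (Eb n 0) (Bk n 0) T" "x = cost (w n) T"
      unfolding E_def V_def by blast
    have "1 * (1 + real n * (1 - \<alpha>)) \<le> phi (wt \<alpha> n 0 1) (Bk n 0) T"
      using LB[OF assms(1) a1(2) T(1)] blk by blast
    also have "\<dots> \<le> cost (w n) T"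
    proof -
      have "\<forall>y. 0 \<le> w n y" using wb by blast
      then show ?thesis unfolding w_def by (rule phi_le_cost)
    qed
    finally show "1 + real n * (1 - \<alpha>) \<le> x" using T by simp
  qed
  have cent_ge: "1 + real n \<le> cent \<alpha> (V n) (E n) (w n)" for n
  proof -
    let ?C = "{cost (w n) T | T. is_centroid_tree \<alpha> (E n) (w n) (V n) T}"
    have ct: "is_centroid_tree \<alpha> (E n) (w n) (V n) (CT n 0)"
      unfolding is_centroid_tree_def E_def V_def w_def
      using CT_search[OF blk] CT_centroid[OF assms(1) a1(2) blk] by auto
    then have mem: "cost (w n) (CT n 0) \<in> ?C" by blast
    have bdd: "bdd_above ?C"
    proof -
      have "\<forall>x\<in>?C. x \<le> real (gb (card (V n))) * real (card (V n))"
      proof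
        fix x assume "x \<in> ?C"
        then obtain T where "is_centroid_tree \<alpha> (E n) (w n) (V n) T" "x = cost (w n) T" by blast
        then show "x \<le> real (gb (card (V n))) * real (card (V n))"
          using cost_bound[of "E n" "V n" T "w n"] wb unfolding is_centroid_tree_def V_def by auto
      qed
      then show ?thesis unfolding bdd_above_def by blast
    qed
    have "cost (w n) (CT n 0) \<le> Sup ?C" using cSup_upper[OF mem bdd] .
    moreover have "cost (w n) (CT n 0) = 1 + real n" unfolding w_def using cost_CT[of \<alpha> n 0 1] by simp
    moreover have "cent \<alpha> (V n) (E n) (w n) = Sup ?C"
    proof -
      have Cne: "(?C = {}) = False" using mem by blast
      show ?thesis unfolding cent_def Let_def Cne if_False ..
    qed
    ultimately show ?thesis by simp
  qed
  have ineq: "cent \<alpha> (V n) (E n) (w n) \<ge> 1 / (1 - \<alpha>) * OPT (V n) (E n) (w n) - \<alpha> / (1 - \<alpha>)" for n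
  proof -
    have "1 / (1 - \<alpha>) * OPT (V n) (E n) (w n) \<le> 1 / (1 - \<alpha>) * (1 + real n * (1 - \<alpha>))"
      using opt_le c0 by (intro mult_left_mono) auto
    also have "1 / (1 - \<alpha>) * (1 + real n * (1 - \<alpha>)) - \<alpha> / (1 - \<alpha>) = 1 + real n"
    proof -
      have h1: "1 / (1 - \<alpha>) * (1 + real n * (1 - \<alpha>)) = 1 / (1 - \<alpha>) + real n"
        using c0 by (simp add: distrib_left)
      have h2: "1 / (1 - \<alpha>) - \<alpha> / (1 - \<alpha>) = 1"
        using c0 by (simp add: diff_divide_distrib[symmetric])
      show ?thesis using h1 h2 by linarith
    qed
    ultimately show ?thesis using cent_ge[of n] by linarith
  qed
  have lim: "filterlim (\<lambda>n. OPT (V n) (E n) (w n)) at_top sequentially"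
    unfolding filterlim_at_top
  proof
    fix Z :: real
    obtain M :: nat where M: "Z / (1 - \<alpha>) \<le> real M" using real_arch_simple by blast
    have "Z \<le> OPT (V n) (E n) (w n)" if "M \<le> n" for n
    proof -
      have "Z \<le> real M * (1 - \<alpha>)" using M c0 by (simp add: field_simps)
      also have "\<dots> \<le> real n * (1 - \<alpha>)" using that c0 by (intro mult_right_mono) auto
      also have "\<dots> \<le> OPT (V n) (E n) (w n)" using opt_ge[of n] by linarith
      finally show ?thesis .
    qed
    then show "\<forall>\<^sub>F n in sequentially. Z \<le> OPT (V n) (E n) (w n)"
      unfolding eventually_sequentially by blast
  qed
  show ?thesis
    apply (rule exI[of _ V], rule exI[of _ E], rule exI[of _ w])
    using tree ws wb ineq lim by auto
qed

end
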